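(* In the setting of the context, let $J_1,J_2$ be the compatible pair of Poisson vector fields $J_i=\alpha_i(\widehat e_2+\mu_i\widehat e_3)$ on an open set $U$ with respect to which $\dot x=v(x)$ is locally bi-Hamiltonian, as in the context, and let $\phi=\alpha_1\alpha_2(\mu_2-\mu_1)/\Vert v\Vert$. Let $\boldsymbol J_i$ be the 1-forms metrically dual to $J_i$ and let $\boldsymbol\beta$ be the 1-form with $d\boldsymbol J_i=\boldsymbol\beta\wedge\boldsymbol J_i$ for $i=1,2$ (it exists and is unique since $\boldsymbol J_1\wedge\boldsymbol J_2\neq0$ and the pair is compatible). Then $$\iota_{\widehat e_1}\boldsymbol\beta=\iota_{\widehat e_1}\big(d\ln|\phi|\big).$$
   Context: Setting: $M$ is an oriented three-dimensional manifold with Riemannian metric $g$; $\nabla$, $\nabla\times$, $\times$ denote gradient, curl and cross product. A Poisson vector field is $J$ with $J\cdot(\nabla\times J)=0$; compatible means $J_1+J_2$ is also Poisson. $v$ is nowhere vanishing, $\widehat e_1=v/\Vert v\Vert$ extended to a local oriented orthonormal frame $(\widehat e_1,\widehat e_2,\widehat e_3)$, $\widehat e_3=\widehat e_1\times\widehat e_2$, with $[\widehat e_i,\widehat e_j]=C_{ij}^k\widehat e_k$. The pair is given by nowhere-equal solutions $\mu_1,\mu_2$ of $\widehat e_1\cdot\nabla\mu=-C_{31}^{2}-\mu(C_{31}^{3}+C_{12}^{2})-\mu^{2}C_{12}^{3}$ and nowhere-vanishing $\alpha_1,\alpha_2$ with $\widehat e_1\cdot\nabla\ln|\alpha_i/\Vert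 v\Vert|=C_{31}^{3}+\mu_iC_{12}^{3}$; there are local functions $H_1,H_2$ with $v=J_1\times\nabla H_2=J_2\times\nabla H_1$. *)

theory Defs
  imports "HOL-Analysis.Analysis"
begin

text \<open>Local coordinate model: an open set U of R^3 (a chart of the oriented 3-manifold M,
  with the coordinate orientation), a Riemannian metric g given by its matrix field,
  vector fields U -> R^3, 1-forms as covector fields (w applied to X is w p \<bullet> X p).\<close>

definition gip :: "(real^3 \<Rightarrow> real^3^3) \<Rightarrow> real^3 \<Rightarrow> real^3 \<Rightarrow> real^3 \<Rightarrow> real" where
  "gip g p X Y = X \<bullet> (g p *v Y)"

definition gnorm :: "(real^3 \<Rightarrow> real^3^3) \<Rightarrow> real^3 \<Rightarrow> real^3 \<Rightarrow> real" where
  "gnorm g p X = sqrt (gip g p X X)"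

definition riemannian_metric :: "(real^3) set \<Rightarrow> (real^3 \<Rightarrow> real^3^3) \<Rightarrow> bool" where
  "riemannian_metric U g \<longleftrightarrow> (\<forall>p\<in>U. transpose (g p) = g p \<and>
      (\<forall>x. x \<noteq> 0 \<longrightarrow> 0 < gip g p x x) \<and> g differentiable (at p))"

text \<open>Riemannian cross product: g(X \<times>_g Y, Z) = vol_g(X,Y,Z).\<close>
definition gcross :: "(real^3 \<Rightarrow> real^3^3) \<Rightarrow> real^3 \<Rightarrow> real^3 \<Rightarrow> real^3 \<Rightarrow> real^3" where
  "gcross g p X Y = sqrt (det (g p)) *\<^sub>R (matrix_inv (g p) *v cross3 X Y)"

definition dirderiv :: "(real^3 \<Rightarrow> real) \<Rightarrow> (real^3 \<Rightarrow> real^3) \<Rightarrow> real^3 \<Rightarrow> real" where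
  "dirderiv f X p = frechet_derivative f (at p) (X p)"

definition vdirderiv :: "(real^3 \<Rightarrow> real^3) \<Rightarrow> (real^3 \<Rightarrow> real^3) \<Rightarrow> real^3 \<Rightarrow> real^3" where
  "vdirderiv Y X p = frechet_derivative Y (at p) (X p)"

text \<open>Lie bracket [X,Y] (so that [X,Y]f = X(Yf) - Y(Xf)).\<close>
definition lie_bracket :: "(real^3 \<Rightarrow> real^3) \<Rightarrow> (real^3 \<Rightarrow> real^3) \<Rightarrow> real^3 \<Rightarrow> real^3" where
  "lie_bracket X Y p = vdirderiv Y X p - vdirderiv X Y p"

definition flat :: "(real^3 \<Rightarrow> real^3^3) \<Rightarrow> (real^3 \<Rightarrow> real^3) \<Rightarrow> real^3 \<Rightarrow> real^3" where
  "flat g J p = g p *v J p"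

definition d1 :: "(real^3 \<Rightarrow> real^3) \<Rightarrow> (real^3 \<Rightarrow> real^3) \<Rightarrow> (real^3 \<Rightarrow> real^3) \<Rightarrow> real^3 \<Rightarrow> real" where
  "d1 w X Y p = dirderiv (\<lambda>q. w q \<bullet> Y q) X p - dirderiv (\<lambda>q. w q \<bullet> X q) Y p
                 - w p \<bullet> lie_bracket X Y p"

definition wedge1 :: "(real^3 \<Rightarrow> real^3) \<Rightarrow> (real^3 \<Rightarrow> real^3) \<Rightarrow> (real^3 \<Rightarrow> real^3) \<Rightarrow> (real^3 \<Rightarrow> real^3) \<Rightarrow> real^3 \<Rightarrow> real" where
  "wedge1 b w X Y p = (b p \<bullet> X p) * (w p \<bullet> Y p) - (b p \<bullet> Y p) * (w p \<bullet> X p)"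

definition dform_eq_wedge :: "(real^3) set \<Rightarrow> (real^3 \<Rightarrow> real^3) \<Rightarrow> (real^3 \<Rightarrow> real^3) \<Rightarrow> bool" where
  "dform_eq_wedge U w b \<longleftrightarrow> (\<forall>X Y. (\<forall>p\<in>U. X differentiable (at p) \<and> Y differentiable (at p)) \<longrightarrow>
      (\<forall>p\<in>U. d1 w X Y p = wedge1 b w X Y p))"

end

theory Submission
  imports Defs
begin


lemma fd_local:
  assumes "(f has_derivative F) (at p)" "open U" "p \<in> U" "\<forall>q\<in>U. f q = h q"
  shows "frechet_derivative h (at p) = F"
proof -
  have "(h has_derivative F) (at p)"
    using has_derivative_transform_within_open[OF assms(1) assms(2) assms(3)] assms(4) by blast
  then show ?thesis using frechet_derivative_at by metis
qed

lemma ln_abs_sq: "ln \<bar>x::real\<bar> = ln (x^2) / 2"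
proof (cases "x = 0")
  case True then show ?thesis by simp
next
  case False
  have "ln (x^2) = ln (\<bar>x\<bar>^2)" by simp
  also have "\<dots> = 2 * ln \<bar>x\<bar>" using False by (subst ln_realpow) auto
  finally show ?thesis by simp
qed

lemma has_derivative_ln_abs:
  fixes f :: "real^3 \<Rightarrow> real"
  assumes "(f has_derivative F) (at p)" "f p \<noteq> 0"
  shows "((\<lambda>q. ln \<bar>f q\<bar>) has_derivative (\<lambda>h. F h / f p)) (at p)"
proof -
  have pos: "0 < (f p)^2" using assms(2) by simp
  have "((\<lambda>q. ln ((f q)^2) / 2) has_derivative (\<lambda>h. F h / f p)) (at p)"
    using assms pos by (auto intro!: derivative_eq_intros simp: power2_eq_square field_simps)
  then show ?thesis by (simp add: ln_abs_sq)
qed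

lemma differentiable_nth:
  fixes f :: "real^3 \<Rightarrow> 'a::real_normed_vector^'n"
  assumes "f differentiable (at p)"
  shows "(\<lambda>q. f q $ i) differentiable (at p)"
proof -
  obtain F where "(f has_derivative F) (at p)" using assms differentiable_def by blast
  from bounded_linear.has_derivative[OF bounded_linear_vec_nth this]
  show ?thesis unfolding differentiable_def by blast
qed

lemma gip_expand:
  "gip g q X Y = (\<Sum>i\<in>UNIV. X $ i * (\<Sum>j\<in>UNIV. g q $ i $ j * Y $ j))"
  unfolding gip_def inner_vec_def matrix_vector_mult_def by simp

lemma gip_diff:
  fixes g :: "real^3 \<Rightarrow> real^3^3" and v :: "real^3 \<Rightarrow> real^3"
  assumes "g differentiable (at p)" "v differentiable (at p)"
  shows "(\<lambda>q. gip g q (v q) (v q)) differentiable (at p)"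
proof -
  have g1: "\<And>i. (\<lambda>q. g q $ i) differentiable (at p)" using differentiable_nth[OF assms(1)] .
  have g2: "\<And>i j. (\<lambda>q. g q $ i $ j) differentiable (at p)" using differentiable_nth[OF g1] .
  have v1: "\<And>i. (\<lambda>q. v q $ i) differentiable (at p)" using differentiable_nth[OF assms(2)] .
  have "(\<lambda>q. (\<Sum>i\<in>UNIV. v q $ i * (\<Sum>j\<in>UNIV. g q $ i $ j * v q $ j))) differentiable (at p)"
    by (intro differentiable_sum differentiable_mult g2 v1 ballI finite)
  then show ?thesis by (simp add: gip_expand)
qed

lemma gip_lin2:
  "gip g q X (a *\<^sub>R (Y + b *\<^sub>R Z)) = a * (gip g q X Y + b * gip g q X Z)"
  unfolding gip_def by (simp add: algebra_simps inner_add_right)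

lemma flat_inner: "flat g J q \<bullet> X = gip g q X (J q)"
  unfolding flat_def gip_def by (simp add: inner_commute)

theorem lemma2:
  fixes U :: "(real^3) set"
    and g :: "real^3 \<Rightarrow> real^3^3"
    and v :: "real^3 \<Rightarrow> real^3"
    and E :: "nat \<Rightarrow> real^3 \<Rightarrow> real^3"
    and C :: "nat \<Rightarrow> nat \<Rightarrow> nat \<Rightarrow> real^3 \<Rightarrow> real"
    and \<mu>1 \<mu>2 \<alpha>1 \<alpha>2 :: "real^3 \<Rightarrow> real"
    and J1 J2 \<beta> :: "real^3 \<Rightarrow> real^3"
  assumes U_open: "open U"
    and metric: "riemannian_metric U g"
    and v_diff: "\<forall>p\<in>U. v differentiable (at p)"
    and v_nz: "\<forall>p\<in>U. v p \<noteq> 0"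
    and E_diff: "\<forall>i\<in>{1,2,3}. \<forall>p\<in>U. E i differentiable (at p)"
    and E_on: "\<forall>p\<in>U. \<forall>i\<in>{1,2,3}. \<forall>j\<in>{1,2,3}.
                 gip g p (E i p) (E j p) = (if i = j then 1 else 0)"
    and E1: "\<forall>p\<in>U. E 1 p = (1 / gnorm g p (v p)) *\<^sub>R v p"
    and E3: "\<forall>p\<in>U. E 3 p = gcross g p (E 1 p) (E 2 p)"
    and C_def: "\<forall>p\<in>U. \<forall>i\<in>{1,2,3}. \<forall>j\<in>{1,2,3}.
                 lie_bracket (E i) (E j) p = (\<Sum>k\<in>{1,2,3}. C i j k p *\<^sub>R E k p)"
    and mu_diff: "\<forall>p\<in>U. \<mu>1 differentiable (at p) \<and> \<mu>2 differentiable (at p)"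
    and alpha_diff: "\<forall>p\<in>U. \<alpha>1 differentiable (at p) \<and> \<alpha>2 differentiable (at p)"
    and mu_neq: "\<forall>p\<in>U. \<mu>1 p \<noteq> \<mu>2 p"
    and alpha_nz: "\<forall>p\<in>U. \<alpha>1 p \<noteq> 0 \<and> \<alpha>2 p \<noteq> 0"
    and mu1_ode: "\<forall>p\<in>U. dirderiv \<mu>1 (E 1) p =
                   - C 3 1 2 p - \<mu>1 p * (C 3 1 3 p + C 1 2 2 p) - (\<mu>1 p)^2 * C 1 2 3 p"
    and mu2_ode: "\<forall>p\<in>U. dirderiv \<mu>2 (E 1) p =
                   - C 3 1 2 p - \<mu>2 p * (C 3 1 3 p + C 1 2 2 p) - (\<mu>2 p)^2 * C 1 2 3 p"
    and alpha1_ode: "\<forall>p\<in>U. dirderiv (\<lambda>q. ln \<bar>\<alpha>1 q / gnorm g q (v q)\<bar>) (E 1) p =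
                   C 3 1 3 p + \<mu>1 p * C 1 2 3 p"
    and alpha2_ode: "\<forall>p\<in>U. dirderiv (\<lambda>q. ln \<bar>\<alpha>2 q / gnorm g q (v q)\<bar>) (E 1) p =
                   C 3 1 3 p + \<mu>2 p * C 1 2 3 p"
    and J1_def: "\<forall>p\<in>U. J1 p = \<alpha>1 p *\<^sub>R (E 2 p + \<mu>1 p *\<^sub>R E 3 p)"
    and J2_def: "\<forall>p\<in>U. J2 p = \<alpha>2 p *\<^sub>R (E 2 p + \<mu>2 p *\<^sub>R E 3 p)"
    and beta1: "dform_eq_wedge U (flat g J1) \<beta>"
    and beta2: "dform_eq_wedge U (flat g J2) \<beta>"
  shows "\<forall>p\<in>U. \<beta> p \<bullet> E 1 p =
           dirderiv (\<lambda>q. ln \<bar>\<alpha>1 q * \<alpha>2 q * (\<mu>2 q - \<mu>1 q) / gnorm g q (v q)\<bar>) (E 1) p"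
proof
  fix p assume pU: "p \<in> U"
  define N where "N = (\<lambda>q. gnorm g q (v q))"
  have on: "\<And>q i j. q \<in> U \<Longrightarrow> i \<in> {1,2,3} \<Longrightarrow> j \<in> {1,2,3} \<Longrightarrow>
      gip g q (E i q) (E j q) = (if i = j then 1 else 0)" using E_on by blast
  have fl: "\<And>q k. q \<in> U \<Longrightarrow> k \<in> {1,2,3::nat} \<Longrightarrow>
      flat g J1 q \<bullet> E k q = \<alpha>1 q * ((if k = 2 then 1 else 0) + \<mu>1 q * (if k = 3 then 1 else 0))"
  proof -
    fix q k assume q: "q \<in> U" and k: "k \<in> {1,2,3::nat}"
    have "flat g J1 q \<bullet> E k q = gip g q (E k q) (\<alpha>1 q *\<^sub>R (E 2 q + \<mu>1 q *\<^sub>R E 3 q))"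
      using J1_def q by (simp add: flat_inner)
    also have "\<dots> = \<alpha>1 q * (gip g q (E k q) (E 2 q) + \<mu>1 q * gip g q (E k q) (E 3 q))"
      by (rule gip_lin2)
    also have "\<dots> = \<alpha>1 q * ((if k = 2 then 1 else 0) + \<mu>1 q * (if k = 3 then 1 else 0))"
      using on[OF q k, of 2] on[OF q k, of 3] by simp
    finally show "flat g J1 q \<bullet> E k q = \<alpha>1 q * ((if k = 2 then 1 else 0) + \<mu>1 q * (if k = 3 then 1 else 0))" .
  qed
  have fl1: "\<forall>q\<in>U. flat g J1 q \<bullet> E 1 q = 0" using fl by simp
  have fl2: "\<forall>q\<in>U. flat g J1 q \<bullet> E 2 q = \<alpha>1 q" using fl by simp
  obtain A1 where A1: "(\<alpha>1 has_derivative A1) (at p)" using alpha_diff pU differentiable_def by blast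
  obtain A2 where A2: "(\<alpha>2 has_derivative A2) (at p)" using alpha_diff pU differentiable_def by blast
  obtain M1 where M1: "(\<mu>1 has_derivative M1) (at p)" using mu_diff pU differentiable_def by blast
  obtain M2 where M2: "(\<mu>2 has_derivative M2) (at p)" using mu_diff pU differentiable_def by blast
  have gd: "g differentiable (at p)" using metric pU unfolding riemannian_metric_def by blast
  have Npos: "\<And>q. q \<in> U \<Longrightarrow> 0 < N q"
  proof -
    fix q assume q: "q \<in> U"
    have "0 < gip g q (v q) (v q)" using metric q v_nz unfolding riemannian_metric_def by blast
    then show "0 < N q" unfolding N_def gnorm_def by simp
  qed
  obtain G where G: "((\<lambda>q. gip g q (v q) (v q)) has_derivative G) (at p)"
    using gip_diff[OF gd] v_diff pU differentiable_def by blast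
  have Gpos: "0 < gip g p (v p) (v p)" using metric pU v_nz unfolding riemannian_metric_def by blast
  have "((\<lambda>q. sqrt (gip g q (v q) (v q))) has_derivative (\<lambda>h. G h * (inverse (sqrt (gip g p (v p) (v p))) / 2))) (at p)"
    by (rule has_derivative_real_sqrt[OF Gpos G])
  then obtain NN where NN: "(N has_derivative NN) (at p)" unfolding N_def gnorm_def by blast
  have Np: "N p \<noteq> 0" using Npos[OF pU] by simp
  have lA1: "((\<lambda>q. ln \<bar>\<alpha>1 q\<bar>) has_derivative (\<lambda>h. A1 h / \<alpha>1 p)) (at p)"
    using has_derivative_ln_abs[OF A1] alpha_nz pU by blast
  have lA2: "((\<lambda>q. ln \<bar>\<alpha>2 q\<bar>) has_derivative (\<lambda>h. A2 h / \<alpha>2 p)) (at p)"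
    using has_derivative_ln_abs[OF A2] alpha_nz pU by blast
  have lN: "((\<lambda>q. ln \<bar>N q\<bar>) has_derivative (\<lambda>h. NN h / N p)) (at p)"
    using has_derivative_ln_abs[OF NN Np] .
  have lM: "((\<lambda>q. ln \<bar>\<mu>2 q - \<mu>1 q\<bar>) has_derivative (\<lambda>h. (M2 h - M1 h) / (\<mu>2 p - \<mu>1 p))) (at p)"
    using has_derivative_ln_abs[OF has_derivative_diff[OF M2 M1]] mu_neq pU by force
  define a1 where "a1 = A1 (E 1 p)"
  define a2 where "a2 = A2 (E 1 p)"
  define m1 where "m1 = M1 (E 1 p)"
  define m2 where "m2 = M2 (E 1 p)"
  define nn where "nn = NN (E 1 p)"
  have m1v: "m1 = - C 3 1 2 p - \<mu>1 p * (C 3 1 3 p + C 1 2 2 p) - (\<mu>1 p)^2 * C 1 2 3 p"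
    using mu1_ode pU frechet_derivative_at[OF M1] unfolding dirderiv_def m1_def by metis
  have m2v: "m2 = - C 3 1 2 p - \<mu>2 p * (C 3 1 3 p + C 1 2 2 p) - (\<mu>2 p)^2 * C 1 2 3 p"
    using mu2_ode pU frechet_derivative_at[OF M2] unfolding dirderiv_def m2_def by metis
  have "frechet_derivative (\<lambda>q. ln \<bar>\<alpha>1 q / gnorm g q (v q)\<bar>) (at p) = (\<lambda>h. A1 h / \<alpha>1 p - NN h / N p)"
  proof (rule fd_local[OF has_derivative_diff[OF lA1 lN] U_open pU], intro ballI)
    fix q assume q: "q \<in> U"
    show "ln \<bar>\<alpha>1 q\<bar> - ln \<bar>N q\<bar> = ln \<bar>\<alpha>1 q / gnorm g q (v q)\<bar>"
      using alpha_nz q Npos[OF q] by (simp add: N_def abs_divide ln_div)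
  qed
  moreover have "frechet_derivative (\<lambda>q. ln \<bar>\<alpha>1 q / gnorm g q (v q)\<bar>) (at p) (E 1 p) = C 3 1 3 p + \<mu>1 p * C 1 2 3 p"
    using alpha1_ode pU unfolding dirderiv_def by blast
  ultimately have a1v: "a1 / \<alpha>1 p - nn / N p = C 3 1 3 p + \<mu>1 p * C 1 2 3 p"
    unfolding a1_def nn_def by simp
  have "frechet_derivative (\<lambda>q. ln \<bar>\<alpha>2 q / gnorm g q (v q)\<bar>) (at p) = (\<lambda>h. A2 h / \<alpha>2 p - NN h / N p)"
  proof (rule fd_local[OF has_derivative_diff[OF lA2 lN] U_open pU], intro ballI)
    fix q assume q: "q \<in> U"
    show "ln \<bar>\<alpha>2 q\<bar> - ln \<bar>N q\<bar> = ln \<bar>\<alpha>2 q / gnorm g q (v q)\<bar>"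
      using alpha_nz q Npos[OF q] by (simp add: N_def abs_divide ln_div)
  qed
  moreover have "frechet_derivative (\<lambda>q. ln \<bar>\<alpha>2 q / gnorm g q (v q)\<bar>) (at p) (E 1 p) = C 3 1 3 p + \<mu>2 p * C 1 2 3 p"
    using alpha2_ode pU unfolding dirderiv_def by blast
  ultimately have a2v: "a2 / \<alpha>2 p - nn / N p = C 3 1 3 p + \<mu>2 p * C 1 2 3 p"
    unfolding a2_def nn_def by simp
  have "frechet_derivative (\<lambda>q. ln \<bar>\<alpha>1 q * \<alpha>2 q * (\<mu>2 q - \<mu>1 q) / gnorm g q (v q)\<bar>) (at p)
      = (\<lambda>h. A1 h / \<alpha>1 p + A2 h / \<alpha>2 p + (M2 h - M1 h) / (\<mu>2 p - \<mu>1 p) - NN h / N p)"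
  proof (rule fd_local[OF has_derivative_diff[OF has_derivative_add[OF has_derivative_add[OF lA1 lA2] lM] lN] U_open pU], intro ballI)
    fix q assume q: "q \<in> U"
    have nz: "\<bar>\<alpha>1 q\<bar> > 0" "\<bar>\<alpha>2 q\<bar> > 0" "\<bar>\<mu>2 q - \<mu>1 q\<bar> > 0" "\<bar>N q\<bar> > 0"
      using alpha_nz mu_neq q Npos[OF q] by auto
    show "ln \<bar>\<alpha>1 q\<bar> + ln \<bar>\<alpha>2 q\<bar> + ln \<bar>\<mu>2 q - \<mu>1 q\<bar> - ln \<bar>N q\<bar> =
        ln \<bar>\<alpha>1 q * \<alpha>2 q * (\<mu>2 q - \<mu>1 q) / gnorm g q (v q)\<bar>"
      using nz by (simp add: N_def abs_mult abs_divide ln_div ln_mult)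
  qed
  then have tv: "dirderiv (\<lambda>q. ln \<bar>\<alpha>1 q * \<alpha>2 q * (\<mu>2 q - \<mu>1 q) / gnorm g q (v q)\<bar>) (E 1) p
      = a1 / \<alpha>1 p + a2 / \<alpha>2 p + (m2 - m1) / (\<mu>2 p - \<mu>1 p) - nn / N p"
    unfolding dirderiv_def a1_def a2_def m1_def m2_def nn_def by simp
  have ediff: "\<forall>q\<in>U. E 1 differentiable (at q) \<and> E 2 differentiable (at q)" using E_diff by simp
  have bw: "d1 (flat g J1) (E 1) (E 2) p = wedge1 \<beta> (flat g J1) (E 1) (E 2) p"
    using beta1 ediff pU unfolding dform_eq_wedge_def by blast
  have t1: "dirderiv (\<lambda>q. flat g J1 q \<bullet> E 2 q) (E 1) p = a1"
    using fd_local[OF A1 U_open pU] fl2 unfolding dirderiv_def a1_def by (metis (no_types, lifting))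
  have t2: "dirderiv (\<lambda>q. flat g J1 q \<bullet> E 1 q) (E 2) p = 0"
  proof -
    have "frechet_derivative (\<lambda>q. flat g J1 q \<bullet> E 1 q) (at p) = (\<lambda>h. 0)"
      by (rule fd_local[OF has_derivative_const U_open pU]) (use fl1 in auto)
    then show ?thesis unfolding dirderiv_def by simp
  qed
  have t3: "flat g J1 p \<bullet> lie_bracket (E 1) (E 2) p = \<alpha>1 p * (C 1 2 2 p + \<mu>1 p * C 1 2 3 p)"
  proof -
    have "flat g J1 p \<bullet> lie_bracket (E 1) (E 2) p = (\<Sum>k\<in>{1,2,3}. C 1 2 k p * (flat g J1 p \<bullet> E k p))"
      using C_def pU by (simp add: inner_sum_right inner_add_right)
    also have "\<dots> = \<alpha>1 p * (C 1 2 2 p + \<mu>1 p * C 1 2 3 p)"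
      using fl[OF pU] by (simp add: algebra_simps)
    finally show ?thesis .
  qed
  have "a1 - 0 - \<alpha>1 p * (C 1 2 2 p + \<mu>1 p * C 1 2 3 p) = (\<beta> p \<bullet> E 1 p) * \<alpha>1 p"
    using bw t1 t2 t3 fl1 fl2 pU unfolding d1_def wedge1_def by simp
  then have bv: "\<beta> p \<bullet> E 1 p = a1 / \<alpha>1 p - C 1 2 2 p - \<mu>1 p * C 1 2 3 p"
    using alpha_nz pU by (auto simp: field_simps)
  have mne: "\<mu>2 p - \<mu>1 p \<noteq> 0" using mu_neq pU by auto
  have q: "(m2 - m1) / (\<mu>2 p - \<mu>1 p) = - (C 3 1 3 p + C 1 2 2 p) - (\<mu>1 p + \<mu>2 p) * C 1 2 3 p"
    using mne unfolding m1v m2v by (simp add: field_simps power2_eq_square)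
  show "\<beta> p \<bullet> E 1 p =
           dirderiv (\<lambda>q. ln \<bar>\<alpha>1 q * \<alpha>2 q * (\<mu>2 q - \<mu>1 q) / gnorm g q (v q)\<bar>) (E 1) p"
    unfolding tv bv q using a1v a2v by (simp add: algebra_simps)
qed

end
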